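(* Let $\mathbf A$ be a nonzero $m\times n$ real matrix and $\mathbf b\ne\mathbf 0$ such that $\mathbf A\mathbf x=\mathbf b$ is consistent, let $\alpha>0$, and let $\mathbf x^*$ be the unique solution of (P2). Let $f(\mathbf y):=-\mathbf b^\top\mathbf y+\frac{\alpha}{2}\|\mathrm{shrink}(\mathbf A^\top\mathbf y)\|_2^2$, so $\nabla f(\mathbf y)=-\mathbf b+\alpha\mathbf A\,\mathrm{shrink}(\mathbf A^\top\mathbf y)$, and let $\mathcal Y^*:=\{\mathbf y\in\mathbb R^m:\alpha\,\mathrm{shrink}(\mathbf A^\top\mathbf y)=\mathbf x^*\}$. Then for all $\mathbf y\in\mathbb R^m$, $$\langle\mathbf y-\mathrm{Proj}_{\mathcal Y^*}(\mathbf y),\nabla f(\mathbf y)\rangle\ge\nu\|\mathbf y-\mathrm{Proj}_{\mathcal Y^*}(\mathbf y)\|_2^2,\qquad \nu:=\lambda_{\mathbf A}\cdot\min_{i\in\mathrm{supp}(\mathbf x^* )}\frac{\alpha|x^*_i|}{|x^*_i|+2\alpha}>0,$$ where $\lambda_{\mathbf A}:=\min\{\lambda_{\min}^{++}(\mathbf C\mathbf C^\top):\ \mathbf C\text{ is a nonzero submatrix of }\mathbf A\text{ formed by a subset of its columns}\}$.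
   Context: Problem (P2) is $\min_{\mathbf x}\{\|\mathbf x\|_1+\frac{1}{2\alpha}\|\mathbf x\|_2^2:\ \mathbf A\mathbf x=\mathbf b\}$; $f$ is the objective of its Lagrange dual, and $\mathcal Y^*$ is the (nonempty, closed, convex) set of minimizers of $f$. $\mathrm{shrink}(\mathbf z)=\mathrm{sign}(\mathbf z)\max\{|\mathbf z|-\mathbf 1,\mathbf 0\}$ componentwise. $\mathrm{Proj}_{\mathcal Y^*}$ is Euclidean projection onto $\mathcal Y^*$. $\lambda_{\min}^{++}(\mathbf S)$ is the smallest strictly positive eigenvalue of a nonzero positive semidefinite $\mathbf S$. *)

theory Defs
  imports "HOL-Analysis.Analysis"
begin

definition shrink :: "real ^ 'n \<Rightarrow> real ^ 'n" where
  "shrink z = (\<chi> i. sgn (z $ i) * max (\<bar>z $ i\<bar> - 1) 0)"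

definition l1norm :: "real ^ 'n \<Rightarrow> real" where
  "l1norm x = (\<Sum>i\<in>UNIV. \<bar>x $ i\<bar>)"

definition P2_obj :: "real \<Rightarrow> real ^ 'n \<Rightarrow> real" where
  "P2_obj \<alpha> x = l1norm x + (1 / (2 * \<alpha>)) * (norm x)\<^sup>2"

definition P2_solution :: "real ^ 'n ^ 'm \<Rightarrow> real ^ 'm \<Rightarrow> real \<Rightarrow> real ^ 'n \<Rightarrow> bool" where
  "P2_solution A b \<alpha> x \<longleftrightarrow> A *v x = b \<and> (\<forall>z. A *v z = b \<longrightarrow> P2_obj \<alpha> x \<le> P2_obj \<alpha> z)"

definition dual_f :: "real ^ 'n ^ 'm \<Rightarrow> real ^ 'm \<Rightarrow> real \<Rightarrow> real ^ 'm \<Rightarrow> real" where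
  "dual_f A b \<alpha> y = - (b \<bullet> y) + (\<alpha> / 2) * (norm (shrink (transpose A *v y)))\<^sup>2"

definition grad_f :: "real ^ 'n ^ 'm \<Rightarrow> real ^ 'm \<Rightarrow> real \<Rightarrow> real ^ 'm \<Rightarrow> real ^ 'm" where
  "grad_f A b \<alpha> y = - b + \<alpha> *\<^sub>R (A *v shrink (transpose A *v y))"

definition Ystar :: "real ^ 'n ^ 'm \<Rightarrow> real \<Rightarrow> real ^ 'n \<Rightarrow> (real ^ 'm) set" where
  "Ystar A \<alpha> xs = {y. \<alpha> *\<^sub>R shrink (transpose A *v y) = xs}"

definition is_eigenvalue :: "real ^ 'm ^ 'm \<Rightarrow> real \<Rightarrow> bool" where
  "is_eigenvalue M c \<longleftrightarrow> (\<exists>v. v \<noteq> 0 \<and> M *v v = c *\<^sub>R v)"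

definition lambda_min_pp :: "real ^ 'm ^ 'm \<Rightarrow> real" where
  "lambda_min_pp M = Inf {c. c > 0 \<and> is_eigenvalue M c}"

text \<open>Submatrix of A formed by the columns in S (other columns set to zero;
  C C^T is unaffected by the zero columns).\<close>
definition col_sub :: "real ^ 'n ^ 'm \<Rightarrow> 'n set \<Rightarrow> real ^ 'n ^ 'm" where
  "col_sub A S = (\<chi> i j. if j \<in> S then A $ i $ j else 0)"

definition lambda_A :: "real ^ 'n ^ 'm \<Rightarrow> real" where
  "lambda_A A = Min ((\<lambda>S. lambda_min_pp (col_sub A S ** transpose (col_sub A S)))
                      ` {S. col_sub A S \<noteq> 0})"

definition supp :: "real ^ 'n \<Rightarrow> 'n set" where
  "supp x = {i. x $ i \<noteq> 0}"

definition nu_const :: "real ^ 'n ^ 'm \<Rightarrow> real \<Rightarrow> real ^ 'n \<Rightarrow> real" where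
  "nu_const A \<alpha> xs = lambda_A A *
     Min ((\<lambda>i. \<alpha> * \<bar>xs $ i\<bar> / (\<bar>xs $ i\<bar> + 2 * \<alpha>)) ` supp xs)"

end

theory Submission
  imports Defs
begin


declare transpose_matrix_vector[simp del]

definition shr :: "real \<Rightarrow> real" where "shr t = sgn t * max (\<bar>t\<bar> - 1) 0"

lemma shrink_nth[simp]: "shrink z $ j = shr (z $ j)"
  by (simp add: shrink_def shr_def)

lemma shr_mono: "a \<le> b \<Longrightarrow> shr a \<le> shr b"
  unfolding shr_def by (auto simp: sgn_if max_def)

lemma shr_prod_nonneg: "0 \<le> (a - b) * (shr a - shr b)"
proof (cases "a \<le> b")
  case True then show ?thesis using shr_mono[OF True] by (simp add: mult_nonpos_nonpos)
next
  case False then show ?thesis using shr_mono[of b a] by simp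
qed

lemma shr_alt: "shr t = (if t > 1 then t - 1 else if t < -1 then t + 1 else 0)"
  unfolding shr_def by (auto simp: sgn_if max_def)

lemma shr_neg: "shr (-t) = - shr t"
  unfolding shr_def by (auto simp: sgn_if max_def)

lemma shr_char_pos:
  assumes "\<alpha> > 0" "t > 1"
  shows "\<alpha> * shr t = x \<longleftrightarrow> ((x \<noteq> 0 \<longrightarrow> t = x / \<alpha> + sgn x) \<and> (x = 0 \<longrightarrow> \<bar>t\<bar> \<le> 1))"
proof
  assume h: "\<alpha> * shr t = x"
  have "shr t = t - 1" using assms by (simp add: shr_alt)
  then have x: "x = \<alpha> * (t - 1)" using h by simp
  then have "x > 0" using assms by simp
  then show "((x \<noteq> 0 \<longrightarrow> t = x / \<alpha> + sgn x) \<and> (x = 0 \<longrightarrow> \<bar>t\<bar> \<le> 1))"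
    using x assms by simp
next
  assume h: "((x \<noteq> 0 \<longrightarrow> t = x / \<alpha> + sgn x) \<and> (x = 0 \<longrightarrow> \<bar>t\<bar> \<le> 1))"
  then have "x \<noteq> 0" using assms by auto
  then have t: "t = x / \<alpha> + sgn x" using h by auto
  have "x > 0"
  proof (rule ccontr)
    assume "\<not> x > 0"
    then have "x < 0" using \<open>x \<noteq> 0\<close> by simp
    then have "x / \<alpha> < 0" using assms by (simp add: divide_neg_pos)
    then show False using t \<open>x < 0\<close> assms by simp
  qed
  then have "t = x / \<alpha> + 1" using t by simp
  then show "\<alpha> * shr t = x" using assms by (simp add: shr_alt field_simps)
qed

lemma shr_char:
  assumes "\<alpha> > 0"
  shows "\<alpha> * shr t = x \<longleftrightarrow> ((x \<noteq> 0 \<longrightarrow> t = x / \<alpha> + sgn x) \<and> (x = 0 \<longrightarrow> \<bar>t\<bar> \<le> 1))"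
proof -
  consider "t > 1" | "t < -1" | "\<bar>t\<bar> \<le> 1" by linarith
  then show ?thesis
  proof cases
    case 1
    then show ?thesis using shr_char_pos[OF assms 1] by simp
  next
    case 2
    then have "-t > 1" by simp
    from shr_char_pos[OF assms this, of "-x"]
    show ?thesis by (auto simp: shr_neg sgn_minus field_simps)
  next
    case 3
    then have s0: "shr t = 0" by (auto simp: shr_alt)
    have "x \<noteq> 0 \<Longrightarrow> \<bar>x / \<alpha> + sgn x\<bar> > 1"
    proof -
      assume "x \<noteq> 0"
      then consider "x > 0" | "x < 0" by linarith
      then show ?thesis
      proof cases
        case 1 then have "x / \<alpha> > 0" using assms by simp
        then show ?thesis using 1 by simp
      next
        case 2 then have "x / \<alpha> < 0" using assms by (simp add: divide_neg_pos)
        then show ?thesis using 2 by simp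
      qed
    qed
    then show ?thesis using 3 s0 by (cases "x = 0") auto
  qed
qed

lemma shr_one_bound_pos:
  assumes "s > 0"
  shows "s * d^2 \<le> (s + 2) * (d * (shr (s + 1 + d) - s))"
proof -
  consider "s + 1 + d \<ge> 1" | "s + 1 + d < 1 \<and> s + 1 + d \<ge> -1" | "s + 1 + d < -1" by linarith
  then show ?thesis
  proof cases
    case 1
    then have "shr (s + 1 + d) = s + d" unfolding shr_def using assms by (auto simp: sgn_if max_def)
    then show ?thesis using assms by (simp add: power2_eq_square algebra_simps)
  next
    case 2
    then have e: "shr (s + 1 + d) = 0" unfolding shr_def using assms by (auto simp: sgn_if max_def)
    have "(-d) * (-d) \<le> (s+2) * (-d)"
      using 2 assms by (intro mult_right_mono) auto
    then have "s * (d * d) \<le> s * ((s+2) * (-d))"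
      using assms by (intro mult_left_mono) auto
    then show ?thesis using e by (simp add: power2_eq_square algebra_simps)
  next
    case 3
    then have e: "shr (s + 1 + d) = s + 2 + d" unfolding shr_def using assms by (auto simp: sgn_if max_def)
    have "0 \<le> (-d) * (-(d + s + 2))" using 3 assms by (intro mult_nonneg_nonneg) auto
    then have "0 \<le> 2 * ((-d) * (-(d + s + 2)))" by simp
    then show ?thesis using e by (simp add: power2_eq_square algebra_simps)
  qed
qed

lemma shr_one_bound:
  assumes "s \<noteq> 0"
  shows "\<bar>s\<bar> * d^2 \<le> (\<bar>s\<bar> + 2) * (d * (shr (s + sgn s + d) - s))"
proof (cases "s > 0")
  case True
  then show ?thesis using shr_one_bound_pos[of s d] by simp
next
  case False
  then have "-s > 0" using assms by simp
  from shr_one_bound_pos[OF this, of "-d"]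
  have "(-s) * (-d)^2 \<le> (-s + 2) * ((-d) * (shr (-s + 1 + -d) - (-s)))" by simp
  moreover have "shr (-s + 1 + -d) = - shr (s + sgn s + d)"
    using False assms shr_neg[of "s + sgn s + d"] by (simp add: sgn_if algebra_simps)
  ultimately show ?thesis using False assms by (simp add: algebra_simps)
qed

lemma L1: "inner (transpose A *v y) u = inner y (A *v (u::real^'n))"
  by (simp add: dot_lmul_matrix transpose_matrix_vector)



lemma quad_zero:
  fixes H K :: real
  assumes "\<And>t. 0 \<le> 2*t*H + t^2*K" "H \<ge> 0"
  shows "H = 0"
proof (rule ccontr)
  assume "H \<noteq> 0"
  then have Hp: "H > 0" using assms(2) by simp
  define D where "D = \<bar>K\<bar> + 1"
  have Dp: "D > 0" by (simp add: D_def)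
  have "0 \<le> 2*(-H/D)*H + (-H/D)^2*K" using assms(1) .
  then have "0 \<le> D^2 * (2*(-H/D)*H + (-H/D)^2*K)" using Dp by simp
  also have "\<dots> = H^2 * (K - 2*D)" using Dp by (simp add: field_simps power2_eq_square)
  finally have "0 \<le> H^2 * (K - 2*D)" .
  moreover have "K - 2*D < 0" by (simp add: D_def)
  moreover have "H^2 > 0" using Hp by simp
  ultimately show False by (simp add: mult_pos_neg zero_le_mult_iff)
qed

lemma rayleigh:
  fixes B :: "real^'a^'b" and V :: "(real^'a) set"
  assumes sub: "subspace V" and nz: "\<exists>x\<in>V. x \<noteq> 0"
    and inj: "\<And>x. x\<in>V \<Longrightarrow> B *v x = 0 \<Longrightarrow> x = 0"
    and inv: "\<And>x. x\<in>V \<Longrightarrow> transpose B *v (B *v x) \<in> V"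
  shows "\<exists>l>0. (\<exists>x0\<in>V. x0 \<noteq> 0 \<and> transpose B *v (B *v x0) = l *\<^sub>R x0)
            \<and> (\<forall>x\<in>V. l * (norm x)^2 \<le> (norm (B *v x))^2)"
proof -
  define K where "K = sphere (0::real^'a) 1 \<inter> V"
  have cK: "compact K" unfolding K_def
    by (intro compact_Int_closed compact_sphere closed_subspace sub)
  obtain x1 where x1: "x1 \<in> V" "x1 \<noteq> 0" using nz by blast
  have "(1 / norm x1) *\<^sub>R x1 \<in> K" unfolding K_def using x1 sub
    by (simp add: subspace_scale)
  then have neK: "K \<noteq> {}" by blast
  have cont: "continuous_on K (\<lambda>x. (norm (B *v x))^2)"
    by (intro continuous_intros linear_continuous_on matrix_vector_mul_bounded_linear)
  obtain x0 where x0K: "x0 \<in> K" and x0min: "\<And>y. y \<in> K \<Longrightarrow> (norm (B *v x0))^2 \<le> (norm (B *v y))^2"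
    using continuous_attains_inf[OF cK neK cont] by blast
  have x0V: "x0 \<in> V" and nx0: "norm x0 = 1" using x0K by (auto simp: K_def)
  define l where "l = (norm (B *v x0))^2"
  have x0nz: "x0 \<noteq> 0" using nx0 by auto
  have "B *v x0 \<noteq> 0" using inj[OF x0V] x0nz by blast
  then have lpos: "l > 0" by (simp add: l_def)
  have bound: "l * (norm x)^2 \<le> (norm (B *v x))^2" if xV: "x \<in> V" for x
  proof (cases "x = 0")
    case True then show ?thesis by simp
  next
    case False
    define u where "u = (1 / norm x) *\<^sub>R x"
    have "u \<in> K" unfolding K_def u_def using xV sub False by (simp add: subspace_scale)
    then have "l \<le> (norm (B *v u))^2" using x0min by (simp add: l_def)
    also have "\<dots> = (norm (B *v x))^2 / (norm x)^2"
      by (simp add: u_def matrix_vector_mult_scaleR power_divide)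
    finally show ?thesis using False by (simp add: field_simps)
  qed
  define h where "h = transpose B *v (B *v x0) - l *\<^sub>R x0"
  have hV: "h \<in> V" unfolding h_def using inv[OF x0V] x0V sub
    by (simp add: subspace_diff subspace_scale)
  have q: "0 \<le> 2*t*(inner h h) + t^2*((norm (B *v h))^2 - l * inner h h)" for t
  proof -
    have "x0 + t *\<^sub>R h \<in> V" using hV x0V sub by (simp add: subspace_add subspace_scale)
    then have b: "l * (norm (x0 + t *\<^sub>R h))^2 \<le> (norm (B *v (x0 + t *\<^sub>R h)))^2" by (rule bound)
    have e1: "(norm (x0 + t *\<^sub>R h))^2 = 1 + 2 * t * inner x0 h + t^2 * inner h h"
    proof -
      have "inner x0 x0 = 1" using nx0 by (simp add: power2_norm_eq_inner[symmetric])
      then show ?thesis unfolding power2_norm_eq_inner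
        by (simp add: inner_add_left inner_add_right inner_commute power2_eq_square algebra_simps)
    qed
    have e2: "(norm (B *v (x0 + t *\<^sub>R h)))^2 = l + 2 * t * inner (transpose B *v (B *v x0)) h + t^2 * (norm (B *v h))^2"
      unfolding L1 l_def power2_norm_eq_inner
      by (simp add: matrix_vector_right_distrib matrix_vector_mult_scaleR
          inner_add_left inner_add_right inner_commute algebra_simps power2_eq_square)
    have e3: "inner h h = inner (transpose B *v (B *v x0)) h - l * inner x0 h"
      by (simp add: h_def inner_diff_left)
    define P where "P = inner (transpose B *v (B *v x0)) h"
    define Q where "Q = inner x0 h"
    define R where "R = inner h h"
    define N where "N = (norm (B *v h))^2"
    have b': "l * (1 + 2 * t * Q + t^2 * R) \<le> l + 2 * t * P + t^2 * N"
      using b unfolding e1 e2 P_def Q_def R_def N_def .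
    have "(l + 2*t*P + t^2*N) - l*(1 + 2*t*Q + t^2*R) = 2*t*(P - l*Q) + t^2*(N - l*R)"
      by (simp add: algebra_simps)
    then have "0 \<le> 2*t*(P - l*Q) + t^2*(N - l*R)" using b' by linarith
    then show ?thesis using e3 unfolding P_def Q_def R_def N_def by simp
  qed
  have "inner h h = 0" by (rule quad_zero[OF q]) simp
  then have "h = 0" by simp
  then have "transpose B *v (B *v x0) = l *\<^sub>R x0" by (simp add: h_def)
  then show ?thesis using lpos x0V x0nz bound by blast
qed



lemma lpp_le: "is_eigenvalue M c \<Longrightarrow> c > 0 \<Longrightarrow> lambda_min_pp M \<le> c"
  unfolding lambda_min_pp_def
  by (rule cInf_lower) (auto simp: bdd_below_def intro!: exI[of _ 0])

lemma mat_nz_vec: "(C::real^'n^'m) \<noteq> 0 \<Longrightarrow> \<exists>u. C *v u \<noteq> 0"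
proof (rule ccontr)
  assume "C \<noteq> 0" "\<not> (\<exists>u. C *v u \<noteq> 0)"
  then have "\<And>j. column j C = 0" by (metis matrix_vector_mult_basis)
  then have "C = 0" by (simp add: vec_eq_iff column_def)
  then show False using \<open>C \<noteq> 0\<close> by simp
qed

lemma lpp_pos:
  fixes C :: "real^'n^'m"
  assumes "C \<noteq> 0"
  shows "lambda_min_pp (C ** transpose C) > 0"
proof -
  define V where "V = range (\<lambda>u. C *v u)"
  have sub: "subspace V" unfolding V_def
    by (intro linear_subspace_image subspace_UNIV matrix_vector_mul_linear)
  obtain u where "C *v u \<noteq> 0" using mat_nz_vec[OF assms] by blast
  then have nz: "\<exists>x\<in>V. x \<noteq> 0" unfolding V_def by blast
  have inj: "x = 0" if "x \<in> V" "transpose C *v x = 0" for x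
  proof -
    obtain u where u: "x = C *v u" using \<open>x \<in> V\<close> unfolding V_def by blast
    have "inner x x = inner (transpose C *v x) u" by (simp only: L1 u)
    then show ?thesis using that by simp
  qed
  have inv: "transpose (transpose C) *v (transpose C *v x) \<in> V" for x
    unfolding V_def by simp
  obtain l x0 where lpos: "l > 0" and x0: "x0 \<in> V" "x0 \<noteq> 0"
    "transpose (transpose C) *v (transpose C *v x0) = l *\<^sub>R x0"
    and bnd: "\<And>x. x\<in>V \<Longrightarrow> l * (norm x)^2 \<le> (norm (transpose C *v x))^2"
    using rayleigh[of V "transpose C", OF sub nz inj inv] by blast
  have "(C ** transpose C) *v x0 = l *\<^sub>R x0"
    using x0(3) by (simp only: transpose_transpose matrix_vector_mul_assoc)
  then have "is_eigenvalue (C ** transpose C) l"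
    unfolding is_eigenvalue_def using x0 by blast
  then have ne: "{c. c > 0 \<and> is_eigenvalue (C ** transpose C) c} \<noteq> {}" using lpos by blast
  have "l \<le> c" if cpos: "c > 0" and ceig: "is_eigenvalue (C ** transpose C) c" for c
  proof -
    obtain w where w: "w \<noteq> 0" "(C ** transpose C) *v w = c *\<^sub>R w"
      using ceig unfolding is_eigenvalue_def by blast
    have "C *v (transpose C *v w) = c *\<^sub>R w" using w by (simp add: matrix_vector_mul_assoc)
    then have "w = (1/c) *\<^sub>R (C *v (transpose C *v w))"
      using cpos by simp
    also have "\<dots> = C *v ((1/c) *\<^sub>R (transpose C *v w))" by (simp add: matrix_vector_mult_scaleR)
    finally have wV: "w \<in> V" unfolding V_def by blast
    have "c * (norm w)^2 = inner w (c *\<^sub>R w)" by (simp add: power2_norm_eq_inner)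
    also have "\<dots> = inner w (C *v (transpose C *v w))" using w by (simp add: matrix_vector_mul_assoc)
    also have "\<dots> = (norm (transpose C *v w))^2" unfolding power2_norm_eq_inner L1 ..
    finally have "c * (norm w)^2 = (norm (transpose C *v w))^2" .
    then have "l * (norm w)^2 \<le> c * (norm w)^2" using bnd[OF wV] by simp
    then show ?thesis using w by simp
  qed
  then have "l \<le> lambda_min_pp (C ** transpose C)"
    unfolding lambda_min_pp_def by (intro cInf_greatest ne) auto
  then show ?thesis using lpos by simp
qed

lemma col_sub_UNIV[simp]: "col_sub A UNIV = A"
  by (simp add: col_sub_def vec_eq_iff)

lemma lambdaA_pos:
  fixes A :: "real^'n^'m"
  assumes "A \<noteq> 0" shows "lambda_A A > 0"
proof -
  have ne: "{S. col_sub A S \<noteq> 0} \<noteq> {}" using assms by (auto intro!: exI[of _ UNIV])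
  show ?thesis unfolding lambda_A_def using ne
    by (subst Min_gr_iff) (auto intro: lpp_pos)
qed

lemma lambdaA_le:
  fixes A :: "real^'n^'m"
  assumes "col_sub A S \<noteq> 0"
  shows "lambda_A A \<le> lambda_min_pp (col_sub A S ** transpose (col_sub A S))"
  unfolding lambda_A_def using assms by (intro Min_le) auto

lemma indep_bound:
  fixes A :: "real^'n^'m" and \<mu> :: "real^'n"
  assumes supp: "\<And>j. j \<notin> F \<Longrightarrow> \<mu> $ j = 0"
    and indep: "\<And>\<beta>. (\<forall>j. j \<notin> F \<longrightarrow> \<beta> $ j = 0) \<Longrightarrow> A *v \<beta> = 0 \<Longrightarrow> \<beta> = 0"
  shows "lambda_A A * (norm \<mu>)^2 \<le> (norm (A *v \<mu>))^2"
proof (cases "\<mu> = 0")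
  case True then show ?thesis by simp
next
  case False
  define C where "C = col_sub A F"
  define V where "V = {x::real^'n. \<forall>j. j \<notin> F \<longrightarrow> x $ j = 0}"
  have CA: "C *v x = A *v x" if "x \<in> V" for x
  proof -
    have "(\<Sum>j\<in>UNIV. C $ i $ j * x $ j) = (\<Sum>j\<in>UNIV. A $ i $ j * x $ j)" for i
      using that unfolding C_def V_def col_sub_def by (intro sum.cong) auto
    then show ?thesis by (simp add: matrix_vector_mult_def vec_eq_iff)
  qed
  have muV: "\<mu> \<in> V" using supp by (simp add: V_def)
  have sub: "subspace V" unfolding V_def subspace_def by auto
  have inj: "x = 0" if "x \<in> V" "C *v x = 0" for x
  proof -
    have "A *v x = 0" using CA[OF that(1)] that(2) by simp
    then show ?thesis using indep[of x] that(1) unfolding V_def by blast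
  qed
  have tz: "(transpose C *v y) $ j = 0" if "j \<notin> F" for y j
  proof -
    have e: "(transpose C *v y) $ j = inner y (C *v axis j 1)" by (simp add: L1[symmetric] inner_axis)
    have "C *v axis j 1 = 0"
      unfolding matrix_vector_mult_basis using that unfolding column_def C_def col_sub_def vec_eq_iff by simp
    then show ?thesis using e by simp
  qed
  note [[simp_trace=false]]
  have inv: "transpose C *v (C *v x) \<in> V" for x
    unfolding V_def using tz by blast
  have nz: "\<exists>x\<in>V. x \<noteq> 0" using muV False by blast
  obtain l x0 where lpos: "l > 0" and x0: "x0 \<in> V" "x0 \<noteq> 0"
    "transpose C *v (C *v x0) = l *\<^sub>R x0"
    and bnd: "\<And>x. x\<in>V \<Longrightarrow> l * (norm x)^2 \<le> (norm (C *v x))^2"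
    using rayleigh[of V C, OF sub nz inj inv] by blast
  have Cx0: "C *v x0 \<noteq> 0" using inj x0 by blast
  have "(C ** transpose C) *v (C *v x0) = l *\<^sub>R (C *v x0)"
    using x0(3) by (simp add: matrix_vector_mul_assoc[symmetric] matrix_vector_mult_scaleR)
  then have "is_eigenvalue (C ** transpose C) l"
    unfolding is_eigenvalue_def using Cx0 by blast
  then have l1: "lambda_min_pp (C ** transpose C) \<le> l" using lpos by (rule lpp_le)
  have "C \<noteq> 0" using Cx0 by auto
  then have l2: "lambda_A A \<le> l" using lambdaA_le[of A F] l1 unfolding C_def by simp
  have "lambda_A A * (norm \<mu>)^2 \<le> l * (norm \<mu>)^2" using l2 by (simp add: mult_right_mono)
  also have "\<dots> \<le> (norm (C *v \<mu>))^2" using bnd[OF muV] .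
  also have "\<dots> = (norm (A *v \<mu>))^2" using CA[OF muV] by simp
  finally show ?thesis .
qed



definition okc :: "real \<Rightarrow> real \<Rightarrow> real \<Rightarrow> bool" where
  "okc \<alpha> xj t \<longleftrightarrow> ((xj \<noteq> 0 \<longrightarrow> t = xj / \<alpha> + sgn xj) \<and> (xj = 0 \<longrightarrow> \<bar>t\<bar> \<le> 1))"

lemma Ystar_char:
  assumes "\<alpha> > 0"
  shows "y \<in> Ystar A \<alpha> x \<longleftrightarrow> (\<forall>j. okc \<alpha> (x $ j) ((transpose A *v y) $ j))"
  unfolding Ystar_def okc_def using shr_char[OF assms] by (simp add: vec_eq_iff)

lemma inner_real_sum: "inner (u::real^'n) w = (\<Sum>j\<in>UNIV. u $ j * w $ j)"
  by (simp add: inner_vec_def)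

lemma abs_step:
  fixes xj hj t :: real
  assumes "t > 0" "xj \<noteq> 0 \<longrightarrow> t * \<bar>hj\<bar> \<le> \<bar>xj\<bar>"
  shows "\<bar>xj + t * hj\<bar> = \<bar>xj\<bar> + t * (if xj \<noteq> 0 then sgn xj * hj else \<bar>hj\<bar>)"
proof -
  consider "xj = 0" | "xj > 0" | "xj < 0" by linarith
  then show ?thesis
  proof cases
    case 1 then show ?thesis using assms by (simp add: abs_mult)
  next
    case 2
    have "- (t * hj) \<le> t * \<bar>hj\<bar>" using mult_left_mono[of "-hj" "\<bar>hj\<bar>" t] assms(1) by simp
    then have "xj + t * hj \<ge> 0" using 2 assms by linarith
    then show ?thesis using 2 by simp
  next
    case 3
    have "t * hj \<le> t * \<bar>hj\<bar>" using assms(1) by (simp add: mult_left_mono)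
    then have "xj + t * hj \<le> 0" using 3 assms by linarith
    then show ?thesis using 3 by simp
  qed
qed

lemma Ystar_nonempty:
  fixes A :: "real^'n^'m" and x :: "real^'n"
  assumes apos: "\<alpha> > 0" and sol: "P2_solution A b \<alpha> x"
  shows "Ystar A \<alpha> x \<noteq> {}"
proof (rule ccontr)
  assume "\<not> Ystar A \<alpha> x \<noteq> {}"
  then have empty: "\<And>y. y \<notin> Ystar A \<alpha> x" by auto
  define e where "e j = x $ j / \<alpha> + sgn (x $ j)" for j
  define lo :: "real^'n" where "lo = (\<chi> j. if x $ j \<noteq> 0 then e j else -1)"
  define hi :: "real^'n" where "hi = (\<chi> j. if x $ j \<noteq> 0 then e j else 1)"
  define G where "G = cbox lo hi"
  have memG: "g \<in> G \<longleftrightarrow> (\<forall>j. okc \<alpha> (x $ j) (g $ j))" for g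
    unfolding G_def mem_box_cart okc_def lo_def hi_def e_def by (auto simp: abs_le_iff)
  define L where "L = range (\<lambda>y. transpose A *v y)"
  have subL: "subspace L" unfolding L_def
    by (intro linear_subspace_image subspace_UNIV matrix_vector_mul_linear)
  have disj: "L \<inter> G = {}"
  proof -
    have "g \<notin> G" if "g \<in> L" for g
    proof
      assume "g \<in> G"
      obtain y where gy: "g = transpose A *v y" using \<open>g \<in> L\<close> unfolding L_def by blast
      have "\<forall>j. okc \<alpha> (x $ j) ((transpose A *v y) $ j)" using \<open>g \<in> G\<close> memG gy by simp
      then have "y \<in> Ystar A \<alpha> x" using Ystar_char[OF apos] by blast
      then show False using empty by blast
    qed
    then show ?thesis by blast
  qed
  have "lo \<in> G" unfolding memG okc_def lo_def by (simp add: e_def)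
  then have neG: "G \<noteq> {}" by blast
  obtain a \<beta> where sepL: "\<forall>l\<in>L. inner a l < \<beta>" and sepG: "\<forall>g\<in>G. inner a g > \<beta>"
    using separating_hyperplane_closed_compact[OF subspace_imp_convex[OF subL] closed_subspace[OF subL]
        convex_box(1) compact_cbox neG[unfolded G_def] disj[unfolded G_def]] unfolding G_def by blast
  have aL: "inner a l = 0" if "l \<in> L" for l
  proof (rule ccontr)
    assume nz: "inner a l \<noteq> 0"
    have "((\<bar>\<beta>\<bar> + 1) / inner a l) *\<^sub>R l \<in> L" using that subL by (simp add: subspace_scale)
    then have "inner a (((\<bar>\<beta>\<bar> + 1) / inner a l) *\<^sub>R l) < \<beta>" using sepL by blast
    then show False using nz by simp
  qed
  have bpos: "\<beta> > 0" using sepL subL by (metis inner_zero_right subspace_0)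
  have "transpose A *v (A *v a) \<in> L" unfolding L_def by blast
  then have "inner a (transpose A *v (A *v a)) = 0" by (rule aL)
  then have "inner (transpose A *v (A *v a)) a = 0" by (simp only: inner_commute)
  then have "inner (A *v a) (A *v a) = 0" by (simp only: L1)
  then have Aa: "A *v a = 0" by simp
  define h where "h = - a"
  have "A *v h = A *v (0 - a)" by (simp add: h_def)
  then have Ah: "A *v h = 0" using Aa by (simp only: matrix_vector_mult_diff_distrib) simp
  have hG: "inner h g < 0" if "g \<in> G" for g
    using sepG that bpos by (simp add: h_def) (metis less_trans)
  define g0 :: "real^'n" where "g0 = (\<chi> j. if x $ j \<noteq> 0 then e j else sgn (h $ j))"
  have "g0 \<in> G" unfolding memG okc_def g0_def e_def by (auto simp: sgn_if)
  then have hg: "inner h g0 < 0" by (rule hG)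
  define \<kappa> where "\<kappa> j = (if x $ j \<noteq> 0 then sgn (x $ j) * h $ j else \<bar>h $ j\<bar>)" for j
  have hg_eq: "inner h g0 = (\<Sum>j\<in>UNIV. \<kappa> j) + inner x h / \<alpha>"
  proof -
    have "h $ j * g0 $ j = \<kappa> j + x $ j * h $ j / \<alpha>" for j
      using apos unfolding g0_def \<kappa>_def e_def by (auto simp: field_simps sgn_if)
    then show ?thesis unfolding inner_real_sum by (simp add: sum.distrib sum_divide_distrib)
  qed
  have hnz: "h \<noteq> 0" using hg by auto
  define T0 where "T0 = (\<lambda>j. \<bar>x $ j\<bar> / (\<bar>h $ j\<bar> + 1)) ` {j. x $ j \<noteq> 0} \<union> {- \<alpha> * inner h g0 / ((norm h)^2 + 1)}"
  define t where "t = Min T0"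
  have fT0: "finite T0" and neT0: "T0 \<noteq> {}" unfolding T0_def by auto
  have "\<alpha> * inner h g0 < 0" using apos hg by (simp add: mult_pos_neg)
  then have "\<alpha> * inner h g0 / ((norm h)^2 + 1) < 0" by (simp add: divide_neg_pos add_nonneg_pos)
  then have tpos: "t > 0" unfolding t_def
    using fT0 neT0 apos hg by (subst Min_gr_iff) (auto simp: T0_def mult_neg_pos intro!: divide_pos_pos)
  have tle: "t \<le> z" if "z \<in> T0" for z unfolding t_def using fT0 that by simp
  have tj: "x $ j \<noteq> 0 \<longrightarrow> t * \<bar>h $ j\<bar> \<le> \<bar>x $ j\<bar>" for j
  proof
    assume "x $ j \<noteq> 0"
    then have "t \<le> \<bar>x $ j\<bar> / (\<bar>h $ j\<bar> + 1)" using tle unfolding T0_def by auto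
    then have "t * (\<bar>h $ j\<bar> + 1) \<le> \<bar>x $ j\<bar>" by (simp add: pos_le_divide_eq add_pos_nonneg)
    then show "t * \<bar>h $ j\<bar> \<le> \<bar>x $ j\<bar>" using tpos by (simp add: algebra_simps)
  qed
  have tq: "t * (norm h)^2 < - 2 * \<alpha> * inner h g0"
  proof -
    have "t \<le> - \<alpha> * inner h g0 / ((norm h)^2 + 1)" using tle unfolding T0_def by auto
    moreover have D: "(norm h)^2 + 1 > 0" by (simp add: add_nonneg_pos)
    ultimately have "t * ((norm h)^2 + 1) \<le> - \<alpha> * inner h g0"
      using pos_le_divide_eq[OF D, of t "- \<alpha> * inner h g0"] by simp
    moreover have "0 < - \<alpha> * inner h g0" using apos hg by (simp add: mult_pos_neg)
    ultimately show ?thesis using tpos by (simp add: algebra_simps)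
  qed
  have l1: "l1norm (x + t *\<^sub>R h) = l1norm x + t * (\<Sum>j\<in>UNIV. \<kappa> j)"
  proof -
    have "\<bar>(x + t *\<^sub>R h) $ j\<bar> = \<bar>x $ j\<bar> + t * \<kappa> j" for j
      using abs_step[OF tpos tj[of j]] by (simp add: \<kappa>_def)
    then show ?thesis unfolding l1norm_def by (simp add: sum.distrib sum_distrib_left)
  qed
  have n2: "(norm (x + t *\<^sub>R h))^2 = (norm x)^2 + 2 * t * inner x h + t^2 * (norm h)^2"
    unfolding power2_norm_eq_inner
    by (simp add: inner_add_left inner_add_right inner_commute power2_eq_square algebra_simps)
  have "P2_obj \<alpha> (x + t *\<^sub>R h) = P2_obj \<alpha> x + t * inner h g0 + t^2 * (norm h)^2 / (2 * \<alpha>)"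
    unfolding P2_obj_def l1 n2 hg_eq using apos by (simp add: field_simps power2_eq_square)
  also have "\<dots> < P2_obj \<alpha> x"
  proof -
    have "t * (t * (norm h)^2) < t * (- 2 * \<alpha> * inner h g0)" using mult_strict_left_mono[OF tq tpos] .
    then have "t^2 * (norm h)^2 / (2 * \<alpha>) < - t * inner h g0" using apos
      by (simp add: field_simps power2_eq_square)
    then show ?thesis by simp
  qed
  finally have lt: "P2_obj \<alpha> (x + t *\<^sub>R h) < P2_obj \<alpha> x" .
  have "A *v (x + t *\<^sub>R h) = b" using sol Ah
    by (simp add: P2_solution_def matrix_vector_right_distrib matrix_vector_mult_scaleR)
  then have "P2_obj \<alpha> x \<le> P2_obj \<alpha> (x + t *\<^sub>R h)" using sol unfolding P2_solution_def by blast
  then show False using lt by simp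
qed



lemma Zcomp: "(transpose A *v y) $ j = inner (A *v axis j 1) (y::real^'m)"
proof -
  have "(transpose A *v y) $ j = inner (transpose A *v y) (axis j 1)" by (simp add: inner_axis)
  also have "\<dots> = inner y (A *v axis j 1)" by (rule L1)
  finally show ?thesis by (simp add: inner_commute)
qed

lemma Ystar_poly:
  fixes A :: "real^'n^'m"
  assumes apos: "\<alpha> > 0"
  shows "polyhedron (Ystar A \<alpha> x)"
proof -
  define H where "H j = (if x $ j \<noteq> 0 then {y. inner (A *v axis j 1) y = x $ j / \<alpha> + sgn (x $ j)}
      else {y. inner (A *v axis j 1) y \<le> 1} \<inter> {y. inner (A *v axis j 1) y \<ge> -1})" for j
  have Hj: "y \<in> H j \<longleftrightarrow> okc \<alpha> (x $ j) ((transpose A *v y) $ j)" for y j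
    by (simp add: H_def okc_def Zcomp abs_le_iff)
  have "Ystar A \<alpha> x = \<Inter> (range H)"
    unfolding set_eq_iff Ystar_char[OF apos] using Hj by auto
  moreover have "polyhedron (\<Inter> (range H))"
    by (intro polyhedron_Inter) (auto simp: H_def polyhedron_hyperplane polyhedron_halfspace_le polyhedron_halfspace_ge)
  ultimately show ?thesis by simp
qed

definition SC :: "real^'n \<Rightarrow> real^'n \<Rightarrow> real^'n \<Rightarrow> bool" where
  "SC w x \<mu> \<longleftrightarrow> (\<forall>j. (x $ j = 0 \<and> \<bar>w $ j\<bar> < 1 \<longrightarrow> \<mu> $ j = 0) \<and> (x $ j = 0 \<and> w $ j = 1 \<longrightarrow> \<mu> $ j \<ge> 0)
     \<and> (x $ j = 0 \<and> w $ j = -1 \<longrightarrow> \<mu> $ j \<le> 0))"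

lemma normal_rep:
  fixes A :: "real^'n^'m" and x :: "real^'n"
  assumes apos: "\<alpha> > 0" and pY: "p \<in> Ystar A \<alpha> x"
    and vi: "\<And>q. q \<in> Ystar A \<alpha> x \<Longrightarrow> inner v (q - p) \<le> 0"
  shows "\<exists>\<mu>. A *v \<mu> = v \<and> SC (transpose A *v p) x \<mu>"
proof -
  define w where "w = transpose A *v p"
  have wok: "okc \<alpha> (x $ j) (w $ j)" for j using pY by (simp add: w_def Ystar_char[OF apos])
  define I where "I = {(j, \<sigma>). \<sigma> \<in> {-1, 1::real} \<and> (x $ j \<noteq> 0 \<or> w $ j = \<sigma>)}"
  define E where "E = (\<lambda>(j, \<sigma>). \<sigma> *\<^sub>R axis j (1::real)) ` I"
  define Gen where "Gen = (\<lambda>e. A *v e) ` E"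
  define H where "H = convex_cone hull Gen"
  define K where "K = (\<lambda>\<mu>. A *v \<mu>) ` {\<mu>. SC w x \<mu>}"
  have finI: "finite I"
    by (rule finite_subset[of _ "UNIV \<times> {-1, 1}"]) (auto simp: I_def)
  have finGen: "finite Gen" unfolding Gen_def E_def using finI by simp
  have convSC: "convex {\<mu>. SC w x \<mu>}"
    unfolding convex_def SC_def by (auto intro: add_nonneg_nonneg mult_nonneg_nonneg
        simp: mult_nonneg_nonpos add_nonpos_nonpos)
  have ccK: "convex_cone K" unfolding convex_cone_def
  proof (intro conjI)
    have "SC w x 0" by (simp add: SC_def)
    then show "K \<noteq> {}" unfolding K_def by blast
    show "convex K" unfolding K_def by (intro convex_linear_image matrix_vector_mul_linear convSC)
    show "conic K" unfolding conic_def K_def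
    proof (intro allI impI)
      fix z and c :: real
      assume "z \<in> (\<lambda>\<mu>. A *v \<mu>) ` {\<mu>. SC w x \<mu>}" "0 \<le> c"
      then obtain \<mu> where "SC w x \<mu>" "z = A *v \<mu>" by blast
      then have "SC w x (c *\<^sub>R \<mu>)" "c *\<^sub>R z = A *v (c *\<^sub>R \<mu>)"
        using \<open>0 \<le> c\<close> by (auto simp: SC_def matrix_vector_mult_scaleR mult_nonneg_nonpos)
      then show "c *\<^sub>R z \<in> (\<lambda>\<mu>. A *v \<mu>) ` {\<mu>. SC w x \<mu>}" by blast
    qed
  qed
  have GenK: "Gen \<subseteq> K"
  proof
    fix g assume "g \<in> Gen"
    then obtain j \<sigma> where js: "(j, \<sigma>) \<in> I" "g = A *v (\<sigma> *\<^sub>R axis j 1)"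
      unfolding Gen_def E_def by auto
    have "SC w x (\<sigma> *\<^sub>R axis j 1)"
      using js(1) unfolding SC_def I_def by (auto simp: axis_def)
    then show "g \<in> K" unfolding K_def using js(2) by blast
  qed
  have HK: "H \<subseteq> K" unfolding H_def by (rule hull_minimal[where S=convex_cone, OF GenK ccK])
  have "v \<in> H"
  proof (rule ccontr)
    assume vH: "v \<notin> H"
    obtain a \<beta> where av: "inner a v < \<beta>" and aH: "\<forall>z\<in>H. inner a z > \<beta>"
      using separating_hyperplane_closed_point[OF _ _ vH] unfolding H_def
      using convex_convex_cone_hull closed_convex_cone_hull[OF finGen] by blast
    have bneg: "\<beta> < 0" using aH convex_cone_hull_contains_0 unfolding H_def by fastforce
    have ag: "inner a g \<ge> 0" if "g \<in> Gen" for g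
    proof (rule ccontr)
      assume neg: "\<not> inner a g \<ge> 0"
      define r where "r = (\<bar>\<beta>\<bar> + 1) / (- inner a g)"
      have "- inner a g > 0" using neg by simp
      then have "r \<ge> 0" unfolding r_def by (intro divide_nonneg_pos) auto
      moreover have "g \<in> H" unfolding H_def using that by (simp add: hull_inc)
      ultimately have "r *\<^sub>R g \<in> H" unfolding H_def by (simp add: conicD conic_convex_cone_hull)
      then have "inner a (r *\<^sub>R g) > \<beta>" using aH by blast
      moreover have "inner a (r *\<^sub>R g) = - (\<bar>\<beta>\<bar> + 1)" using neg by (simp add: r_def)
      ultimately show False using bneg by simp
    qed
    define h where "h = - a"
    define c where "c j = (transpose A *v h) $ j" for j
    have hv: "inner h v > 0" using av bneg by (simp add: h_def)
    have sc: "\<sigma> * c j \<le> 0" if "(j, \<sigma>) \<in> I" for j \<sigma>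
    proof -
      have "A *v (\<sigma> *\<^sub>R axis j 1) \<in> Gen" unfolding Gen_def E_def using that by force
      then have "inner a (A *v (\<sigma> *\<^sub>R axis j 1)) \<ge> 0" by (rule ag)
      then show ?thesis
        by (simp add: c_def h_def Zcomp matrix_vector_mult_scaleR inner_commute)
    qed
    have c0: "c j = 0" if "x $ j \<noteq> 0" for j
      using sc[of j 1] sc[of j "-1"] that by (simp add: I_def)
    have c1: "c j \<le> 0" if "x $ j = 0" "w $ j = 1" for j
      using sc[of j 1] that by (simp add: I_def)
    have c2: "c j \<ge> 0" if "x $ j = 0" "w $ j = -1" for j
      using sc[of j "-1"] that by (simp add: I_def)
    define T1 where "T1 = insert 1 ((\<lambda>j. (1 - \<bar>w $ j\<bar>) / (\<bar>c j\<bar> + 1)) ` {j. \<bar>w $ j\<bar> < 1}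
        \<union> (\<lambda>j. 1 / (\<bar>c j\<bar> + 1)) ` UNIV)"
    define t where "t = Min T1"
    have fT1: "finite T1" and neT1: "T1 \<noteq> {}" unfolding T1_def by auto
    have tpos: "t > 0" unfolding t_def using fT1 neT1
      by (subst Min_gr_iff) (auto simp: T1_def add_nonneg_pos)
    have tle: "t \<le> z" if "z \<in> T1" for z unfolding t_def using fT1 that by simp
    have t1: "t * \<bar>c j\<bar> \<le> 1" for j
    proof -
      have "t \<le> 1 / (\<bar>c j\<bar> + 1)" using tle unfolding T1_def by auto
      then have "t * (\<bar>c j\<bar> + 1) \<le> 1" by (simp add: pos_le_divide_eq add_nonneg_pos)
      then show ?thesis using tpos by (simp add: algebra_simps)
    qed
    have t2: "t * \<bar>c j\<bar> \<le> 1 - \<bar>w $ j\<bar>" if "\<bar>w $ j\<bar> < 1" for j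
    proof -
      have "t \<le> (1 - \<bar>w $ j\<bar>) / (\<bar>c j\<bar> + 1)" using tle that unfolding T1_def by auto
      then have "t * (\<bar>c j\<bar> + 1) \<le> 1 - \<bar>w $ j\<bar>" by (simp add: pos_le_divide_eq add_nonneg_pos)
      then show ?thesis using tpos by (simp add: algebra_simps)
    qed
    define q where "q = p + t *\<^sub>R h"
    have Zq: "(transpose A *v q) $ j = w $ j + t * c j" for j
      by (simp add: q_def w_def c_def matrix_vector_right_distrib matrix_vector_mult_scaleR)
    have "okc \<alpha> (x $ j) ((transpose A *v q) $ j)" for j
    proof (cases "x $ j = 0")
      case False
      then show ?thesis using wok[of j] c0[OF False] Zq[of j] by simp
    next
      case True
      then have wj: "\<bar>w $ j\<bar> \<le> 1" using wok[of j] by (simp add: okc_def)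
      have tc: "\<bar>t * c j\<bar> = t * \<bar>c j\<bar>" using tpos by (simp add: abs_mult)
      consider "w $ j = 1" | "w $ j = -1" | "\<bar>w $ j\<bar> < 1" using wj by linarith
      then show ?thesis
      proof cases
        case 1
        have "t * c j \<le> 0" using c1[OF True 1] tpos by (simp add: mult_nonneg_nonpos)
        then show ?thesis using True 1 Zq[of j] t1[of j] tc by (simp add: okc_def abs_le_iff)
      next
        case 2
        have "t * c j \<ge> 0" using c2[OF True 2] tpos by simp
        moreover have "t * c j \<le> t * \<bar>c j\<bar>" using tpos by (intro mult_left_mono) auto
        ultimately show ?thesis using True 2 Zq[of j] t1[of j] tc by (simp add: okc_def abs_le_iff)
      next
        case 3
        have "\<bar>w $ j + t * c j\<bar> \<le> \<bar>w $ j\<bar> + \<bar>t * c j\<bar>" by (rule abs_triangle_ineq)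
        then have "\<bar>w $ j + t * c j\<bar> \<le> 1" using t2[OF 3] tc by linarith
        then show ?thesis using True Zq[of j] by (simp add: okc_def)
      qed
    qed
    then have "q \<in> Ystar A \<alpha> x" using Ystar_char[OF apos] by blast
    then have "inner v (q - p) \<le> 0" by (rule vi)
    moreover have "inner v (q - p) = t * inner h v" by (simp add: q_def inner_commute)
    moreover have "t * inner h v > 0" using tpos hv by simp
    ultimately show False by simp
  qed
  then have "v \<in> K" using HK by blast
  then show ?thesis unfolding K_def w_def by blast
qed



lemma carath_step:
  fixes A :: "real^'n^'m" and \<mu> \<beta> :: "real^'n"
  assumes supp0: "\<And>j. \<mu> $ j = 0 \<Longrightarrow> \<beta> $ j = 0" and Ab: "A *v \<beta> = 0"
    and ex: "\<exists>j. \<mu> $ j * \<beta> $ j > 0"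
  shows "\<exists>\<mu>'. A *v \<mu>' = A *v \<mu> \<and> (\<forall>j. \<mu>' $ j * \<mu> $ j \<ge> 0 \<and> (\<mu> $ j = 0 \<longrightarrow> \<mu>' $ j = 0))
           \<and> card {j. \<mu>' $ j \<noteq> 0} < card {j. \<mu> $ j \<noteq> 0}"
proof -
  define P where "P = {j. \<mu> $ j * \<beta> $ j > 0}"
  have fP: "finite P" and neP: "P \<noteq> {}" using ex by (auto simp: P_def)
  define t where "t = Min ((\<lambda>j. \<mu> $ j / \<beta> $ j) ` P)"
  have tin: "t \<in> (\<lambda>j. \<mu> $ j / \<beta> $ j) ` P" unfolding t_def using fP neP by (intro Min_in) auto
  then obtain j0 where j0: "j0 \<in> P" "t = \<mu> $ j0 / \<beta> $ j0" by blast
  have tle: "t \<le> \<mu> $ j / \<beta> $ j" if "j \<in> P" for j unfolding t_def using fP that by simp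
  have tpos: "t > 0" using j0 by (simp add: P_def zero_less_divide_iff zero_less_mult_iff)
  define \<mu>' where "\<mu>' = \<mu> - t *\<^sub>R \<beta>"
  have A': "A *v \<mu>' = A *v \<mu>" using Ab by (simp add: \<mu>'_def matrix_vector_mult_diff_distrib matrix_vector_mult_scaleR)
  have sgn': "\<mu>' $ j * \<mu> $ j \<ge> 0" for j
  proof (cases "j \<in> P")
    case True
    then have pb: "\<mu> $ j * \<beta> $ j > 0" by (simp add: P_def)
    then have bnz: "\<beta> $ j \<noteq> 0" by auto
    have "t * (\<mu> $ j * \<beta> $ j) \<le> (\<mu> $ j / \<beta> $ j) * (\<mu> $ j * \<beta> $ j)"
      using tle[OF True] pb by (intro mult_right_mono) auto
    also have "\<dots> = \<mu> $ j * \<mu> $ j" using bnz by (simp add: field_simps)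
    finally show ?thesis by (simp add: \<mu>'_def algebra_simps)
  next
    case False
    then have "\<mu> $ j * \<beta> $ j \<le> 0" by (simp add: P_def)
    then have "t * (\<mu> $ j * \<beta> $ j) \<le> 0" using tpos by (simp add: mult_nonneg_nonpos)
    moreover have "0 \<le> \<mu> $ j * \<mu> $ j" by simp
    ultimately have "t * (\<mu> $ j * \<beta> $ j) \<le> \<mu> $ j * \<mu> $ j" by linarith
    then show ?thesis by (simp add: \<mu>'_def algebra_simps)
  qed
  have z': "\<mu> $ j = 0 \<Longrightarrow> \<mu>' $ j = 0" for j using supp0[of j] by (simp add: \<mu>'_def)
  have j0z: "\<mu>' $ j0 = 0" using j0 by (auto simp: \<mu>'_def P_def)
  have j0nz: "\<mu> $ j0 \<noteq> 0" using j0 by (auto simp: P_def)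
  have "{j. \<mu>' $ j \<noteq> 0} \<subset> {j. \<mu> $ j \<noteq> 0}" using z' j0z j0nz by auto
  then have "card {j. \<mu>' $ j \<noteq> 0} < card {j. \<mu> $ j \<noteq> 0}" by (intro psubset_card_mono) auto
  then show ?thesis using A' sgn' z' by blast
qed

lemma SC_pres:
  assumes "SC w x \<mu>" "\<And>j. \<mu>' $ j * \<mu> $ j \<ge> 0" "\<And>j. \<mu> $ j = 0 \<Longrightarrow> \<mu>' $ j = 0"
  shows "SC w x \<mu>'"
  unfolding SC_def
proof (intro allI conjI impI)
  fix j
  have s: "\<mu>' $ j * \<mu> $ j \<ge> 0" by (rule assms(2))
  show "\<mu>' $ j = 0" if "x $ j = 0 \<and> \<bar>w $ j\<bar> < 1" using that assms(1,3) by (auto simp: SC_def)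
  show "\<mu>' $ j \<ge> 0" if "x $ j = 0 \<and> w $ j = 1"
  proof (cases "\<mu> $ j = 0")
    case True then show ?thesis using assms(3) by simp
  next
    case False
    then have "\<mu> $ j > 0" using that assms(1) by (auto simp: SC_def less_le)
    then show ?thesis using s by (simp add: zero_le_mult_iff)
  qed
  show "\<mu>' $ j \<le> 0" if "x $ j = 0 \<and> w $ j = -1"
  proof (cases "\<mu> $ j = 0")
    case True then show ?thesis using assms(3) by simp
  next
    case False
    then have "\<mu> $ j < 0" using that assms(1) by (auto simp: SC_def less_le)
    then show ?thesis using s by (simp add: zero_le_mult_iff)
  qed
qed

lemma carath:
  fixes A :: "real^'n^'m"
  assumes "A *v \<mu>0 = v" "SC w x \<mu>0"
  shows "\<exists>\<mu>. A *v \<mu> = v \<and> SC w x \<mu> \<and> (\<forall>\<beta>. (\<forall>j. \<mu> $ j = 0 \<longrightarrow> \<beta> $ j = 0) \<longrightarrow> A *v \<beta> = 0 \<longrightarrow> \<beta> = 0)"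
proof -
  obtain \<mu> where good: "A *v \<mu> = v \<and> SC w x \<mu>"
    and least: "\<And>\<mu>'. A *v \<mu>' = v \<and> SC w x \<mu>' \<Longrightarrow> card {j. \<mu> $ j \<noteq> 0} \<le> card {j. \<mu>' $ j \<noteq> 0}"
    using ex_has_least_nat[of "\<lambda>\<mu>. A *v \<mu> = v \<and> SC w x \<mu>" \<mu>0 "\<lambda>\<mu>. card {j. \<mu> $ j \<noteq> 0}"] assms
    by blast
  have indep: "\<beta> = 0" if sb: "\<forall>j. \<mu> $ j = 0 \<longrightarrow> \<beta> $ j = 0" and Ab: "A *v \<beta> = 0" for \<beta>
  proof (rule ccontr)
    assume "\<beta> \<noteq> 0"
    then obtain j where bj: "\<beta> $ j \<noteq> 0" by (auto simp: vec_eq_iff)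
    then have mj: "\<mu> $ j \<noteq> 0" using sb by auto
    define \<beta>' where "\<beta>' = (if \<mu> $ j * \<beta> $ j > 0 then \<beta> else - \<beta>)"
    have "\<mu> $ j * \<beta>' $ j > 0"
      using bj mj by (auto simp: \<beta>'_def zero_less_mult_iff mult_less_0_iff linorder_neq_iff)
    moreover have "\<mu> $ i = 0 \<Longrightarrow> \<beta>' $ i = 0" for i using sb by (simp add: \<beta>'_def)
    moreover have "A *v \<beta>' = 0"
    proof -
      have "A *v (0 - \<beta>) = 0" using Ab by (simp only: matrix_vector_mult_diff_distrib) simp
      then show ?thesis using Ab by (simp add: \<beta>'_def)
    qed
    ultimately obtain \<mu>' where m': "A *v \<mu>' = A *v \<mu>"
      "\<forall>j. \<mu>' $ j * \<mu> $ j \<ge> 0 \<and> (\<mu> $ j = 0 \<longrightarrow> \<mu>' $ j = 0)"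
      "card {j. \<mu>' $ j \<noteq> 0} < card {j. \<mu> $ j \<noteq> 0}"
      using carath_step[of \<mu> \<beta>' A] by blast
    have "SC w x \<mu>'" using SC_pres[of w x \<mu> \<mu>'] good m'(2) by blast
    then have "card {j. \<mu> $ j \<noteq> 0} \<le> card {j. \<mu>' $ j \<noteq> 0}" using least good m'(1) by simp
    then show False using m'(3) by simp
  qed
  show ?thesis using good indep by blast
qed

lemma alg_final:
  fixes N R M l :: real
  assumes "N \<le> R * M" "l * M^2 \<le> N" "l > 0" "N \<ge> 0" "R \<ge> 0" "M \<ge> 0"
  shows "l * N \<le> R^2"
proof (cases "N = 0")
  case True then show ?thesis by simp
next
  case False
  then have Np: "N > 0" using assms by simp
  have "N^2 \<le> (R * M)^2" using assms(1,4) by (intro power_mono) auto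
  then have "l * N^2 \<le> l * (R^2 * M^2)" using assms(3) by (simp add: power_mult_distrib)
  also have "\<dots> = R^2 * (l * M^2)" by simp
  also have "\<dots> \<le> R^2 * N" using assms(2) by (intro mult_left_mono) auto
  finally have "(l * N) * N \<le> R^2 * N" by (simp add: power2_eq_square algebra_simps)
  then show ?thesis using Np by simp
qed



theorem mainTheorem17:
  fixes A :: "real ^ 'n ^ 'm" and b :: "real ^ 'm" and \<alpha> :: real and xs :: "real ^ 'n"
  assumes "A \<noteq> 0" and "b \<noteq> 0" and "\<exists>x. A *v x = b" and "\<alpha> > 0"
    and "P2_solution A b \<alpha> xs"
  shows "nu_const A \<alpha> xs > 0 \<and>
    (\<forall>y. let p = closest_point (Ystar A \<alpha> xs) y in
          (y - p) \<bullet> grad_f A b \<alpha> y \<ge> nu_const A \<alpha> xs * (norm (y - p))\<^sup>2)"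
proof -
  note Anz = assms(1) and bnz = assms(2) and apos = assms(4) and sol = assms(5)
  have bAx: "A *v xs = b" using sol by (simp add: P2_solution_def)
  have xnz: "xs \<noteq> 0" using bAx bnz by auto
  define c where "c = Min ((\<lambda>i. \<alpha> * \<bar>xs $ i\<bar> / (\<bar>xs $ i\<bar> + 2 * \<alpha>)) ` supp xs)"
  have fin: "finite (supp xs)" by simp
  have ne: "supp xs \<noteq> {}" using xnz by (auto simp: supp_def vec_eq_iff)
  have cpos: "c > 0" unfolding c_def using fin ne apos
    by (subst Min_gr_iff) (auto simp: supp_def intro!: divide_pos_pos add_pos_pos)
  have cle: "c \<le> \<alpha> * \<bar>xs $ i\<bar> / (\<bar>xs $ i\<bar> + 2 * \<alpha>)" if "xs $ i \<noteq> 0" for i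
    unfolding c_def using fin that by (intro Min_le) (auto simp: supp_def)
  have cla: "c \<le> \<alpha>"
  proof -
    obtain i where i: "xs $ i \<noteq> 0" using ne by (auto simp: supp_def)
    have "\<alpha> * \<bar>xs $ i\<bar> \<le> \<alpha> * (\<bar>xs $ i\<bar> + 2 * \<alpha>)" using apos by simp
    then have "\<alpha> * \<bar>xs $ i\<bar> / (\<bar>xs $ i\<bar> + 2 * \<alpha>) \<le> \<alpha>" using apos i
      by (simp add: divide_le_eq add_pos_pos)
    then show ?thesis using cle[OF i] by simp
  qed
  have lA: "lambda_A A > 0" by (rule lambdaA_pos[OF Anz])
  have nu: "nu_const A \<alpha> xs = lambda_A A * c" by (simp add: nu_const_def c_def)
  show ?thesis
  proof (intro conjI allI)
    show "nu_const A \<alpha> xs > 0" using nu lA cpos by simp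
  next
    fix y
    define Y where "Y = Ystar A \<alpha> xs"
    have polY: "polyhedron Y" unfolding Y_def by (rule Ystar_poly[OF apos])
    have clY: "closed Y" using polY by (rule polyhedron_imp_closed)
    have cvY: "convex Y" using polY by (rule polyhedron_imp_convex)
    have neY: "Y \<noteq> {}" unfolding Y_def by (rule Ystar_nonempty[OF apos sol])
    define p where "p = closest_point Y y"
    have pY: "p \<in> Y" unfolding p_def by (rule closest_point_in_set[OF clY neY])
    have vi: "inner (y - p) (q - p) \<le> 0" if "q \<in> Y" for q
      unfolding p_def by (rule closest_point_dot[OF cvY clY that])
    define v where "v = y - p"
    obtain \<mu>0 where m0: "A *v \<mu>0 = v" "SC (transpose A *v p) xs \<mu>0"
      using normal_rep[OF apos pY[unfolded Y_def], of v] vi unfolding Y_def v_def by blast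
    obtain \<mu> where mu: "A *v \<mu> = v" "SC (transpose A *v p) xs \<mu>"
      and indep: "\<And>\<beta>. (\<forall>j. \<mu> $ j = 0 \<longrightarrow> \<beta> $ j = 0) \<Longrightarrow> A *v \<beta> = 0 \<Longrightarrow> \<beta> = 0"
      using carath[OF m0] by blast
    define w where "w = transpose A *v p"
    define d where "d = transpose A *v v"
    have Zy: "transpose A *v y = w + d"
      by (simp add: w_def d_def v_def matrix_vector_mult_diff_distrib)
    have xsp: "\<alpha> *\<^sub>R shrink w = xs" using pY by (simp add: Y_def Ystar_def w_def)
    then have xsj: "\<alpha> * shr (w $ j) = xs $ j" for j by (simp add: vec_eq_iff)
    have wok: "okc \<alpha> (xs $ j) (w $ j)" for j
      using pY by (simp add: Y_def w_def Ystar_char[OF apos])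
    have grad: "grad_f A b \<alpha> y = \<alpha> *\<^sub>R (A *v (shrink (w + d) - shrink w))"
    proof -
      have "b = \<alpha> *\<^sub>R (A *v shrink w)" using bAx xsp by (metis matrix_vector_mult_scaleR)
      then show ?thesis unfolding grad_f_def Zy
        by (simp add: matrix_vector_mult_diff_distrib algebra_simps)
    qed
    define \<phi> where "\<phi> j = \<alpha> * (d $ j * (shr (w $ j + d $ j) - shr (w $ j)))" for j
    have lhs: "inner v (grad_f A b \<alpha> y) = (\<Sum>j\<in>UNIV. \<phi> j)"
    proof -
      have "inner v (grad_f A b \<alpha> y) = \<alpha> * inner v (A *v (shrink (w + d) - shrink w))"
        unfolding grad by simp
      also have "\<dots> = \<alpha> * inner d (shrink (w + d) - shrink w)"
        unfolding d_def by (simp only: L1)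
      also have "\<dots> = (\<Sum>j\<in>UNIV. \<phi> j)"
        unfolding inner_real_sum \<phi>_def by (simp add: sum_distrib_left)
      finally show ?thesis .
    qed
    define \<rho> :: "real^'n" where "\<rho> = (\<chi> j. if d $ j * \<mu> $ j > 0 then d $ j else 0)"
    have phi: "c * (\<rho> $ j)^2 \<le> \<phi> j" for j
    proof (cases "d $ j * \<mu> $ j > 0")
      case False
      have "0 \<le> ((w $ j + d $ j) - w $ j) * (shr (w $ j + d $ j) - shr (w $ j))" by (rule shr_prod_nonneg)
      then have "0 \<le> \<phi> j" unfolding \<phi>_def using apos by simp
      then show ?thesis using False by (simp add: \<rho>_def)
    next
      case True
      then have rj: "\<rho> $ j = d $ j" by (simp add: \<rho>_def)
      have mnz: "\<mu> $ j \<noteq> 0" using True by auto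
      show ?thesis
      proof (cases "xs $ j = 0")
        case False
        define s where "s = xs $ j / \<alpha>"
        have snz: "s \<noteq> 0" using False apos by (simp add: s_def)
        have sgs: "sgn s = sgn (xs $ j)" using apos by (simp add: s_def sgn_divide)
        have wj: "w $ j = s + sgn s" using wok[of j] False sgs by (simp add: okc_def s_def)
        have shw: "shr (w $ j) = s" using xsj[of j] apos by (simp add: s_def field_simps)
        have B: "\<bar>s\<bar> * (d $ j)^2 \<le> (\<bar>s\<bar> + 2) * (d $ j * (shr (w $ j + d $ j) - shr (w $ j)))"
          using shr_one_bound[OF snz, of "d $ j"] wj shw by simp
        have sp: "\<bar>s\<bar> + 2 > 0" by simp
        have "\<bar>s\<bar> * (d $ j)^2 / (\<bar>s\<bar> + 2) \<le> d $ j * (shr (w $ j + d $ j) - shr (w $ j))"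
          using B sp by (simp add: divide_le_eq mult.commute)
        then have "\<alpha> * (\<bar>s\<bar> * (d $ j)^2 / (\<bar>s\<bar> + 2)) \<le> \<phi> j"
          unfolding \<phi>_def using apos by (intro mult_left_mono) auto
        moreover have "\<alpha> * (\<bar>s\<bar> * (d $ j)^2 / (\<bar>s\<bar> + 2)) = (\<alpha> * \<bar>xs $ j\<bar> / (\<bar>xs $ j\<bar> + 2 * \<alpha>)) * (d $ j)^2"
          using apos by (simp add: s_def abs_divide field_simps)
        moreover have "c * (d $ j)^2 \<le> (\<alpha> * \<bar>xs $ j\<bar> / (\<bar>xs $ j\<bar> + 2 * \<alpha>)) * (d $ j)^2"
          using cle[OF False] by (intro mult_right_mono) auto
        ultimately show ?thesis using rj by simp
      next
        case True
        have wj: "\<bar>w $ j\<bar> \<le> 1" using wok[of j] True by (simp add: okc_def)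
        have "\<not> \<bar>w $ j\<bar> < 1" using mu(2) True mnz by (auto simp: SC_def w_def)
        then consider "w $ j = 1" | "w $ j = -1" using wj by linarith
        then have "\<phi> j = \<alpha> * (d $ j)^2"
        proof cases
          case 1
          then have "\<mu> $ j \<ge> 0" using mu(2) True by (auto simp: SC_def w_def)
          then have "d $ j > 0" using \<open>d $ j * \<mu> $ j > 0\<close> by (simp add: zero_less_mult_iff)
          then show ?thesis using 1 by (simp add: \<phi>_def shr_alt power2_eq_square)
        next
          case 2
          then have "\<mu> $ j \<le> 0" using mu(2) True by (auto simp: SC_def w_def)
          then have "d $ j < 0" using \<open>d $ j * \<mu> $ j > 0\<close> by (simp add: zero_less_mult_iff)
          then show ?thesis using 2 by (simp add: \<phi>_def shr_alt power2_eq_square)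
        qed
        moreover have "c * (d $ j)^2 \<le> \<alpha> * (d $ j)^2" using cla by (intro mult_right_mono) auto
        ultimately show ?thesis using rj by simp
      qed
    qed
    have sumle: "c * (norm \<rho>)^2 \<le> (\<Sum>j\<in>UNIV. \<phi> j)"
    proof -
      have "c * (norm \<rho>)^2 = (\<Sum>j\<in>UNIV. c * (\<rho> $ j)^2)"
        unfolding power2_norm_eq_inner inner_real_sum by (simp add: sum_distrib_left power2_eq_square)
      also have "\<dots> \<le> (\<Sum>j\<in>UNIV. \<phi> j)" by (intro sum_mono phi)
      finally show ?thesis .
    qed
    have nv: "(norm v)^2 \<le> norm \<rho> * norm \<mu>"
    proof -
      have "(norm v)^2 = inner v (A *v \<mu>)" using mu(1) by (simp add: power2_norm_eq_inner)
      also have "\<dots> = inner d \<mu>" unfolding d_def by (simp only: L1)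
      also have "\<dots> = (\<Sum>j\<in>UNIV. d $ j * \<mu> $ j)" by (rule inner_real_sum)
      also have "\<dots> \<le> (\<Sum>j\<in>UNIV. \<rho> $ j * \<mu> $ j)"
        by (intro sum_mono) (auto simp: \<rho>_def)
      also have "\<dots> = inner \<rho> \<mu>" by (rule inner_real_sum[symmetric])
      also have "\<dots> \<le> norm \<rho> * norm \<mu>" by (rule norm_cauchy_schwarz)
      finally show ?thesis .
    qed
    have lam: "lambda_A A * (norm \<mu>)^2 \<le> (norm v)^2"
      using indep_bound[of "{j. \<mu> $ j \<noteq> 0}" \<mu> A] indep mu(1) by auto
    have key: "lambda_A A * (norm v)^2 \<le> (norm \<rho>)^2"
      by (rule alg_final[OF nv lam lA]) auto
    have "nu_const A \<alpha> xs * (norm v)^2 = c * (lambda_A A * (norm v)^2)" using nu by simp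
    also have "\<dots> \<le> c * (norm \<rho>)^2" using key cpos by (intro mult_left_mono) auto
    also have "\<dots> \<le> inner v (grad_f A b \<alpha> y)" using sumle lhs by simp
    finally show "let p = closest_point (Ystar A \<alpha> xs) y in
          (y - p) \<bullet> grad_f A b \<alpha> y \<ge> nu_const A \<alpha> xs * (norm (y - p))\<^sup>2"
      unfolding Let_def using v_def p_def Y_def by simp
  qed
qed


end
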